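(* Let $V$ be a finite dimensional vector space over a field $\mathbb{K}$ of characteristic zero, and let $u,v\in\widehat L(V)$ satisfy $|\exp(u)|=|\exp(v)|\in|\widehat T(V)|$. Then $|u^m|=|v^m|\in|\widehat T(V)|$ for all $m\ge0$.
   Context: $\widehat T(V)=\prod_{m\ge0}V^{\otimes m}$ is the completed tensor algebra and $\widehat L(V)\subset\widehat T(V)$ the completed free Lie algebra on $V$ (the primitive elements). $|\widehat T(V)|$ is the quotient of $\widehat T(V)$ by the closure of the span of commutators $ab-ba$, with projection $x\mapsto|x|$. *)

theory Defs
  imports Main
begin

text \<open>V has a basis indexed by the finite type 'a; the completed tensor algebra
  is the space of all formal series in non-commuting letters 'a, i.e. functions
  from words to the field.\<close>

type_synonym ('a, 'k) tseries = "'a list \<Rightarrow> 'k"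

definition ts_one :: "('a, 'k::field) tseries" where
  "ts_one = (\<lambda>w. if w = [] then 1 else 0)"

definition ts_add :: "('a, 'k::field) tseries \<Rightarrow> ('a, 'k) tseries \<Rightarrow> ('a, 'k) tseries" where
  "ts_add f g = (\<lambda>w. f w + g w)"

definition ts_diff :: "('a, 'k::field) tseries \<Rightarrow> ('a, 'k) tseries \<Rightarrow> ('a, 'k) tseries" where
  "ts_diff f g = (\<lambda>w. f w - g w)"

definition ts_smult :: "'k::field \<Rightarrow> ('a, 'k) tseries \<Rightarrow> ('a, 'k) tseries" where
  "ts_smult c f = (\<lambda>w. c * f w)"

definition ts_mul :: "('a, 'k::field) tseries \<Rightarrow> ('a, 'k) tseries \<Rightarrow> ('a, 'k) tseries" where
  "ts_mul f g = (\<lambda>w. \<Sum>i\<le>length w. f (take i w) * g (drop i w))"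

fun ts_pow :: "('a, 'k::field) tseries \<Rightarrow> nat \<Rightarrow> ('a, 'k) tseries" where
  "ts_pow f 0 = ts_one"
| "ts_pow f (Suc m) = ts_mul f (ts_pow f m)"

text \<open>Exponential of a series with zero constant term: the coefficient of a word w
  in \<open>\<Sum>m. f^m/m!\<close> only receives contributions from m \<le> length w.\<close>
definition ts_exp :: "('a, 'k::field_char_0) tseries \<Rightarrow> ('a, 'k) tseries" where
  "ts_exp f = (\<lambda>w. \<Sum>m\<le>length w. ts_pow f m w / fact m)"

inductive_set lie_poly :: "('a, 'k::field) tseries set" where
  gen: "(\<lambda>w. if w = [a] then 1 else 0) \<in> lie_poly"
| add: "f \<in> lie_poly \<Longrightarrow> g \<in> lie_poly \<Longrightarrow> ts_add f g \<in> lie_poly"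
| smult: "f \<in> lie_poly \<Longrightarrow> ts_smult c f \<in> lie_poly"
| bracket: "f \<in> lie_poly \<Longrightarrow> g \<in> lie_poly \<Longrightarrow> ts_diff (ts_mul f g) (ts_mul g f) \<in> lie_poly"

definition hom_comp :: "nat \<Rightarrow> ('a, 'k::field) tseries \<Rightarrow> ('a, 'k) tseries" where
  "hom_comp d f = (\<lambda>w. if length w = d then f w else 0)"

text \<open>Completed free Lie algebra: every homogeneous component is a Lie polynomial.\<close>
definition lie_series :: "('a, 'k::field) tseries \<Rightarrow> bool" where
  "lie_series f \<longleftrightarrow> (\<forall>d. hom_comp d f \<in> lie_poly)"

text \<open>Span of commutators ab - ba (a, b arbitrary series); scalars are absorbed into a.\<close>
inductive_set comm_span :: "('a, 'k::field) tseries set" where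
  zero: "(\<lambda>w. 0) \<in> comm_span"
| step: "x \<in> comm_span \<Longrightarrow> ts_add (ts_diff (ts_mul a b) (ts_mul b a)) x \<in> comm_span"

text \<open>|x| = |y|: x - y lies in the closure of the span of commutators, for the
  inverse-limit (degree-adic) topology on the completed tensor algebra.\<close>
definition trace_eq :: "('a, 'k::field) tseries \<Rightarrow> ('a, 'k) tseries \<Rightarrow> bool" where
  "trace_eq x y \<longleftrightarrow>
     (\<forall>N::nat. \<exists>g\<in>comm_span. \<forall>w. length w < N \<longrightarrow> ts_diff x y w = g w)"

end

theory Submission
  imports Defs
begin

section \<open>Basic algebra of series\<close>

lemma ts_mul_Nil: "ts_mul f g [] = f [] * g []"
  by (simp add: ts_mul_def)

lemma ts_mul_Cons: "ts_mul f g (a # w) = f [] * g (a # w) + ts_mul (\<lambda>v. f (a # v)) g w"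
  unfolding ts_mul_def by (simp add: sum.atMost_Suc_shift del: sum.atMost_Suc)

lemma ts_mul_linL: "ts_mul (\<lambda>v. c * f1 v + f2 v) g w = c * ts_mul f1 g w + ts_mul f2 g w"
  unfolding ts_mul_def by (simp add: sum.distrib sum_distrib_left algebra_simps)

lemma ts_mul_zeroL: "ts_mul (\<lambda>v. 0) g w = 0"
  unfolding ts_mul_def by simp

lemma ts_mul_assoc_pt: "ts_mul (ts_mul f g) h w = ts_mul f (ts_mul g h) w"
proof (induction w arbitrary: f)
  case Nil
  then show ?case by (simp add: ts_mul_Nil)
next
  case (Cons a w)
  have "ts_mul (ts_mul f g) h (a # w) = f [] * g [] * h (a # w) + ts_mul (\<lambda>v. f [] * g (a # v) + ts_mul (\<lambda>v. f (a # v)) g v) h w"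
    by (simp add: ts_mul_Cons ts_mul_Nil)
  also have "\<dots> = f [] * g [] * h (a # w) + f [] * ts_mul (\<lambda>v. g (a # v)) h w + ts_mul (\<lambda>v. f (a # v)) (ts_mul g h) w"
    by (simp add: ts_mul_linL Cons.IH)
  also have "\<dots> = ts_mul f (ts_mul g h) (a # w)"
    by (simp add: ts_mul_Cons ts_mul_Nil algebra_simps)
  finally show ?case .
qed

lemma ts_mul_assoc: "ts_mul (ts_mul f g) h = ts_mul f (ts_mul g h)"
  using ts_mul_assoc_pt by blast

lemma ts_mul_oneL_pt: "ts_mul ts_one g w = g w"
proof (induction w)
  case Nil
  then show ?case by (simp add: ts_mul_Nil ts_one_def)
next
  case (Cons a w)
  have "(\<lambda>v. ts_one (a # v)) = (\<lambda>v. 0)" by (simp add: ts_one_def)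
  then show ?case by (simp add: ts_mul_Cons ts_one_def ts_mul_zeroL)
qed

lemma ts_mul_oneL: "ts_mul ts_one g = g"
  using ts_mul_oneL_pt by blast

lemma ts_pow_add: "ts_mul (ts_pow f p) (ts_pow f q) = ts_pow f (p + q)"
  by (induction p) (simp_all add: ts_mul_oneL ts_mul_assoc)

lemma ts_pow_small: "u [] = 0 \<Longrightarrow> length w < m \<Longrightarrow> ts_pow u m w = 0"
proof (induction m arbitrary: w)
  case 0
  then show ?case by simp
next
  case (Suc m)
  have "\<forall>i\<in>{..length w}. u (take i w) * ts_pow u m (drop i w) = 0"
  proof
    fix i assume "i \<in> {..length w}"
    then have ile: "i \<le> length w" by simp
    show "u (take i w) * ts_pow u m (drop i w) = 0"
    proof (cases "i = 0")
      case True then show ?thesis using Suc.prems by simp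
    next
      case False then have "length (drop i w) < m" using Suc.prems ile by auto
      then show ?thesis using Suc.IH Suc.prems by simp
    qed
  qed
  then show ?case unfolding ts_pow.simps ts_mul_def by (rule sum.neutral)
qed

section \<open>Coproduct\<close>

definition Lw :: "('a \<times> bool) list \<Rightarrow> 'a list" where "Lw p = map fst (filter snd p)"
definition Rw :: "('a \<times> bool) list \<Rightarrow> 'a list" where "Rw p = map fst (filter (\<lambda>x. \<not> snd x) p)"

lemma Lw_append[simp]: "Lw (p @ q) = Lw p @ Lw q" by (simp add: Lw_def)
lemma Rw_append[simp]: "Rw (p @ q) = Rw p @ Rw q" by (simp add: Rw_def)
lemma Lw_Nil[simp]: "Lw [] = []" by (simp add: Lw_def)
lemma Rw_Nil[simp]: "Rw [] = []" by (simp add: Rw_def)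

lemma Lw_Rw_length: "length p = length (Lw p) + length (Rw p)"
  using sum_length_filter_compl[of snd p] by (simp add: Lw_def Rw_def)

definition WW :: "'a list \<Rightarrow> 'a list \<Rightarrow> ('a \<times> bool) list set" where
  "WW s t = {p. Lw p = s \<and> Rw p = t}"

lemma finite_len: "finite {p :: ('b::finite) list. length p = n}"
  using finite_lists_length_eq[of "UNIV::'b set" n] by simp

lemma finite_len_less: "finite {p :: ('b::finite) list. length p < n}"
  using finite_lists_length_le[of "UNIV::'b set" n] by (rule finite_subset[rotated]) auto

lemma finite_WW: "finite (WW (s::'a::finite list) t)"
proof (rule finite_subset[OF _ finite_len[of "length s + length t"]])
  show "WW s t \<subseteq> {p. length p = length s + length t}"
    using Lw_Rw_length by (auto simp: WW_def)
qed

definition Dl :: "('a, 'k::field) tseries \<Rightarrow> 'a list \<Rightarrow> 'a list \<Rightarrow> 'k" where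
  "Dl x s t = (\<Sum>p\<in>WW s t. x (map fst p))"

definition Psi :: "('a, 'k::field) tseries \<Rightarrow> ('a, 'k) tseries" where
  "Psi x w = (\<Sum>i\<le>length w. Dl x (take i w) (drop i w))"

lemma sum_split:
  assumes "finite A"
  shows "(\<Sum>p\<in>A. \<Sum>i\<le>length p. F (take i p) (drop i p)) = (\<Sum>(x,y)\<in>{(x,y). x @ y \<in> A}. F x y)"
proof -
  have "(\<Sum>p\<in>A. \<Sum>i\<le>length p. F (take i p) (drop i p))
      = (\<Sum>(p,i)\<in>Sigma A (\<lambda>p. {..length p}). F (take i p) (drop i p))"
    using assms by (rule sum.Sigma) simp
  also have "\<dots> = (\<Sum>(x,y)\<in>{(x,y). x @ y \<in> A}. F x y)"
    by (rule sum.reindex_bij_witness[where i = "\<lambda>(x,y). (x @ y, length x)"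
          and j = "\<lambda>(p,i). (take i p, drop i p)"]) (auto simp: min_def)
  finally show ?thesis .
qed

lemma ts_mul_split: "ts_mul f g w = (\<Sum>(x,y)\<in>{(x,y). x @ y = w}. f x * g y)"
  using sum_split[of "{w}" "\<lambda>x y. f x * g y"] by (simp add: ts_mul_def)

lemma finite_WW': "finite (WW (s::'a::finite list) t)" by (rule finite_WW)

lemma Dl_mul:
  "Dl (ts_mul f g) (s::'a::finite list) t =
    (\<Sum>ij\<in>{..length s} \<times> {..length t}.
        Dl f (take (fst ij) s) (take (snd ij) t) * Dl g (drop (fst ij) s) (drop (snd ij) t))"
proof -
  define B where "B = (\<lambda>ij. WW (take (fst ij) s) (take (snd ij) t) \<times> WW (drop (fst ij) s) (drop (snd ij) t))"
  have "Dl (ts_mul f g) s t = (\<Sum>p\<in>WW s t. \<Sum>i\<le>length p. f (map fst (take i p)) * g (map fst (drop i p)))"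
    by (simp add: Dl_def ts_mul_def take_map drop_map)
  also have "\<dots> = (\<Sum>(x,y)\<in>{(x,y). x @ y \<in> WW s t}. f (map fst x) * g (map fst y))"
    by (rule sum_split[OF finite_WW, of "\<lambda>x y. f (map fst x) * g (map fst y)"])
  also have "\<dots> = (\<Sum>(ij,xy)\<in>Sigma ({..length s} \<times> {..length t}) B. f (map fst (fst xy)) * g (map fst (snd xy)))"
  proof (rule sym, rule sum.reindex_bij_witness[where j = "\<lambda>(ij,xy). xy"
        and i = "\<lambda>xy. ((length (Lw (fst xy)), length (Rw (fst xy))), xy)"])
    fix a assume "a \<in> Sigma ({..length s} \<times> {..length t}) B"
    then obtain i j x y where a: "a = ((i,j),(x,y))" "i \<le> length s" "j \<le> length t"
      "Lw x = take i s" "Rw x = take j t" "Lw y = drop i s" "Rw y = drop j t"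
      by (auto simp: B_def WW_def)
    then show "((length (Lw (fst (case a of (ij, xy) \<Rightarrow> xy))), length (Rw (fst (case a of (ij, xy) \<Rightarrow> xy)))), case a of (ij, xy) \<Rightarrow> xy) = a"
      by (simp add: min_def)
    show "(case a of (ij, xy) \<Rightarrow> xy) \<in> {(x, y). x @ y \<in> WW s t}"
      using a by (simp add: WW_def)
  next
    fix b assume "b \<in> {(x, y). x @ y \<in> WW s t}"
    then obtain x y where b: "b = (x,y)" "Lw x @ Lw y = s" "Rw x @ Rw y = t"
      by (auto simp: WW_def)
    show "(case ((length (Lw (fst b)), length (Rw (fst b))), b) of (ij, xy) \<Rightarrow> xy) = b" by simp
    show "((length (Lw (fst b)), length (Rw (fst b))), b) \<in> Sigma ({..length s} \<times> {..length t}) B"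
      using b by (auto simp: B_def WW_def)
  next
    fix a assume "a \<in> Sigma ({..length s} \<times> {..length t}) B"
    show "(case case a of (ij, xy) \<Rightarrow> xy of (x, y) \<Rightarrow> f (map fst x) * g (map fst y)) =
         (case a of (ij, xy) \<Rightarrow> f (map fst (fst xy)) * g (map fst (snd xy)))"
      by (auto split: prod.splits)
  qed
  also have "\<dots> = (\<Sum>ij\<in>{..length s} \<times> {..length t}. \<Sum>xy\<in>B ij. f (map fst (fst xy)) * g (map fst (snd xy)))"
    by (rule sum.Sigma[symmetric]) (auto simp: B_def finite_WW)
  also have "\<dots> = (\<Sum>ij\<in>{..length s} \<times> {..length t}.
        Dl f (take (fst ij) s) (take (snd ij) t) * Dl g (drop (fst ij) s) (drop (snd ij) t))"
    unfolding B_def Dl_def by (simp add: sum_product sum.cartesian_product case_prod_beta)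
  finally show ?thesis .
qed

lemma WW_Nil_right: "WW s [] = {map (\<lambda>a. (a, True)) s}"
proof (intro set_eqI iffI)
  fix p assume "p \<in> WW s []"
  then have h: "Lw p = s" "filter (\<lambda>x. \<not> snd x) p = []" by (auto simp: WW_def Rw_def)
  then have allT: "\<forall>x\<in>set p. snd x" by (simp add: filter_empty_conv)
  then have "filter snd p = p" by (simp add: filter_id_conv)
  then have "map fst p = s" using h by (simp add: Lw_def)
  moreover have "map (\<lambda>a. (a, True)) (map fst p) = p"
    using allT by (induction p) auto
  ultimately show "p \<in> {map (\<lambda>a. (a, True)) s}" by auto
next
  fix p assume "p \<in> {map (\<lambda>a. (a, True)) s}"
  then show "p \<in> WW s []" by (simp add: WW_def Lw_def Rw_def comp_def filter_id_conv)
qed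

lemma WW_Nil_left: "WW [] t = {map (\<lambda>a. (a, False)) t}"
proof (intro set_eqI iffI)
  fix p assume "p \<in> WW [] t"
  then have h: "Rw p = t" "filter snd p = []" by (auto simp: WW_def Lw_def)
  then have allT: "\<forall>x\<in>set p. \<not> snd x" by (simp add: filter_empty_conv)
  then have "filter (\<lambda>x. \<not> snd x) p = p" by (simp add: filter_id_conv)
  then have "map fst p = t" using h by (simp add: Rw_def)
  moreover have "map (\<lambda>a. (a, False)) (map fst p) = p"
    using allT by (induction p) auto
  ultimately show "p \<in> {map (\<lambda>a. (a, False)) t}" by auto
next
  fix p assume "p \<in> {map (\<lambda>a. (a, False)) t}"
  then show "p \<in> WW [] t" by (simp add: WW_def Lw_def Rw_def comp_def filter_id_conv)
qed

lemma Dl_Nil_right[simp]: "Dl x s [] = x s"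
  by (simp add: Dl_def WW_Nil_right comp_def)

lemma Dl_Nil_left[simp]: "Dl x [] t = x t"
  by (simp add: Dl_def WW_Nil_left comp_def)

lemma Dl_ext:
  assumes "\<And>w. length w = length s + length t \<Longrightarrow> x w = y w"
  shows "Dl x s t = Dl y s t"
  unfolding Dl_def
proof (rule sum.cong[OF refl])
  fix p assume "p \<in> WW s t"
  then have "length (map fst p) = length s + length t"
    using Lw_Rw_length[of p] by (simp add: WW_def)
  then show "x (map fst p) = y (map fst p)" by (rule assms)
qed

lemma Dl_add: "Dl (ts_add f g) s t = Dl f s t + Dl g s t"
  by (simp add: Dl_def ts_add_def sum.distrib)
lemma Dl_diff: "Dl (ts_diff f g) s t = Dl f s t - Dl g s t"
  by (simp add: Dl_def ts_diff_def sum_subtractf)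
lemma Dl_smult: "Dl (ts_smult c f) s t = c * Dl f s t"
  by (simp add: Dl_def ts_smult_def sum_distrib_left)

definition prim :: "('a, 'k::field) tseries \<Rightarrow> bool" where
  "prim u \<longleftrightarrow> u [] = 0 \<and> (\<forall>s t. s \<noteq> [] \<longrightarrow> t \<noteq> [] \<longrightarrow> Dl u s t = 0)"

lemma prim_Dl: "prim u \<Longrightarrow> Dl u s t = (if t = [] then u s else 0) + (if s = [] then u t else 0)"
  by (cases "s = []"; cases "t = []") (auto simp: prim_def)

lemma Dl_mul_prim:
  fixes f g :: "('a::finite, 'k::field) tseries"
  assumes pf: "prim f" and pg: "prim g" and s: "s \<noteq> []" and t: "t \<noteq> []"
  shows "Dl (ts_mul f g) s t = f t * g s + f s * g t"
proof -
  have f0: "f [] = 0" and g0: "g [] = 0" using pf pg by (auto simp: prim_def)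
  let ?F = "\<lambda>ij. Dl f (take (fst ij) s) (take (snd ij) t) * Dl g (drop (fst ij) s) (drop (snd ij) t)"
  have fin: "finite ({..length s} \<times> {..length t})" by simp
  have sub: "{(0, length t), (length s, 0)} \<subseteq> {..length s} \<times> {..length t}" by auto
  have z: "\<forall>ij\<in>{..length s} \<times> {..length t} - {(0, length t), (length s, 0)}. ?F ij = 0"
  proof
    fix ij assume "ij \<in> {..length s} \<times> {..length t} - {(0, length t), (length s, 0)}"
    moreover obtain i j where "ij = (i,j)" by (cases ij)
    ultimately have ij: "ij = (i,j)" "i \<le> length s" "j \<le> length t"
       "(i,j) \<noteq> (0, length t)" "(i,j) \<noteq> (length s, 0)" by auto
    have "Dl f (take i s) (take j t) * Dl g (drop i s) (drop j t) = 0"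
      using ij s t f0 g0 unfolding prim_Dl[OF pf] prim_Dl[OF pg] by auto
    then show "?F ij = 0" using ij by simp
  qed
  have "Dl (ts_mul f g) s t = sum ?F ({..length s} \<times> {..length t})" by (rule Dl_mul)
  also have "\<dots> = sum ?F {(0, length t), (length s, 0)}"
    by (rule sum.mono_neutral_right[OF fin sub z])
  also have "\<dots> = f t * g s + f s * g t"
    using s t f0 g0 by (simp add: prim_Dl[OF pf] prim_Dl[OF pg])
  finally show ?thesis .
qed

lemma lie_poly_Nil: "f \<in> lie_poly \<Longrightarrow> f [] = 0"
  by (induction rule: lie_poly.induct) (auto simp: ts_add_def ts_smult_def ts_diff_def ts_mul_Nil)

lemma lie_poly_prim:
  fixes f :: "('a::finite, 'k::field) tseries"
  shows "f \<in> lie_poly \<Longrightarrow> prim f"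
proof (induction rule: lie_poly.induct)
  case (gen a)
  have "Dl (\<lambda>w. if w = [a] then 1 else 0) s t = (0::'k)" if "s \<noteq> []" "t \<noteq> []" for s t
    unfolding Dl_def
  proof (rule sum.neutral, rule ballI)
    fix p assume "p \<in> WW s t"
    then have "length p = length s + length t" using Lw_Rw_length[of p] by (simp add: WW_def)
    then have "length (map fst p) \<ge> 2" using that by (cases s; cases t) auto
    then show "(if map fst p = [a] then 1 else 0) = (0::'k)" by auto
  qed
  then show ?case by (simp add: prim_def)
next
  case (add f g) then show ?case by (simp add: prim_def Dl_add) (simp add: ts_add_def)
next
  case (smult f c) then show ?case by (simp add: prim_def Dl_smult) (simp add: ts_smult_def)
next
  case (bracket f g)
  have pf: "prim f" and pg: "prim g" using bracket.IH by auto
  have f0: "f [] = 0" and g0: "g [] = 0" using pf pg by (auto simp: prim_def)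
  have "Dl (ts_diff (ts_mul f g) (ts_mul g f)) s t = 0" if "s \<noteq> []" "t \<noteq> []" for s t
    unfolding Dl_diff using Dl_mul_prim[OF pf pg that] Dl_mul_prim[OF pg pf that] by (simp add: algebra_simps)
  moreover have "ts_diff (ts_mul f g) (ts_mul g f) [] = 0"
    by (simp add: ts_diff_def ts_mul_Nil)
  ultimately show ?case by (simp add: prim_def)
qed

lemma lie_series_prim:
  fixes u :: "('a::finite, 'k::field) tseries"
  assumes "lie_series u" shows "prim u"
proof -
  have h: "hom_comp d u \<in> lie_poly" for d using assms by (simp add: lie_series_def)
  have "u [] = 0" using lie_poly_Nil[OF h[of 0]] by (simp add: hom_comp_def)
  moreover have "Dl u s t = 0" if "s \<noteq> []" "t \<noteq> []" for s t
  proof -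
    have "Dl u s t = Dl (hom_comp (length s + length t) u) s t"
      by (rule Dl_ext) (simp add: hom_comp_def)
    also have "\<dots> = 0" using lie_poly_prim[OF h] that by (simp add: prim_def)
    finally show ?thesis .
  qed
  ultimately show ?thesis by (simp add: prim_def)
qed

lemma pascal_aux:
  fixes A B :: "nat \<Rightarrow> 'k::comm_ring_1"
  shows "(\<Sum>q\<le>m. of_nat (m choose q) * A q * B (Suc (m - q)))
     = A 0 * B (Suc m) + (\<Sum>q\<le>m. of_nat (m choose Suc q) * A (Suc q) * B (m - q))"
proof (cases m)
  case 0 then show ?thesis by simp
next
  case (Suc n)
  have "(\<Sum>q\<le>m. of_nat (m choose q) * A q * B (Suc (m - q)))
      = A 0 * B (Suc m) + (\<Sum>q\<le>n. of_nat (m choose Suc q) * A (Suc q) * B (Suc (m - Suc q)))"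
    unfolding Suc by (simp add: sum.atMost_Suc_shift del: sum.atMost_Suc)
  also have "(\<Sum>q\<le>n. of_nat (m choose Suc q) * A (Suc q) * B (Suc (m - Suc q)))
      = (\<Sum>q\<le>n. of_nat (m choose Suc q) * A (Suc q) * B (m - q))"
    by (rule sum.cong) (auto simp: Suc Suc_diff_le)
  also have "\<dots> = (\<Sum>q\<le>m. of_nat (m choose Suc q) * A (Suc q) * B (m - q))"
    unfolding Suc by (simp add: binomial_eq_0)
  finally show ?thesis .
qed

lemma pascal_sum:
  fixes A B :: "nat \<Rightarrow> 'k::comm_ring_1"
  shows "(\<Sum>q\<le>m. of_nat (m choose q) * A (Suc q) * B (m - q))
       + (\<Sum>q\<le>m. of_nat (m choose q) * A q * B (Suc (m - q)))
     = (\<Sum>q\<le>Suc m. of_nat (Suc m choose q) * A q * B (Suc m - q))"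
proof -
  have "(\<Sum>q\<le>Suc m. of_nat (Suc m choose q) * A q * B (Suc m - q))
      = A 0 * B (Suc m) + (\<Sum>q\<le>m. of_nat (Suc m choose Suc q) * A (Suc q) * B (m - q))"
    by (simp add: sum.atMost_Suc_shift del: sum.atMost_Suc)
  also have "\<dots> = A 0 * B (Suc m) + (\<Sum>q\<le>m. of_nat (m choose q) * A (Suc q) * B (m - q))
        + (\<Sum>q\<le>m. of_nat (m choose Suc q) * A (Suc q) * B (m - q))"
    by (simp add: sum.distrib algebra_simps)
  finally show ?thesis using pascal_aux[of m A B] by (simp add: algebra_simps)
qed

lemma sum_if_zero_idx:
  fixes G :: "nat \<Rightarrow> 'k::comm_monoid_add"
  shows "(\<Sum>j\<le>length t. if take j t = [] then G j else 0) = G 0"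
proof -
  have "(\<Sum>j\<le>length t. if take j t = [] then G j else 0) = (\<Sum>j\<le>length t. if j = 0 then G j else 0)"
    by (rule sum.cong) auto
  then show ?thesis by simp
qed

lemma sum_prod_fst_snd: "(\<Sum>ij\<in>A \<times> B. F (fst ij) (snd ij)) = (\<Sum>i\<in>A. \<Sum>j\<in>B. F i j)"
  by (simp add: sum.cartesian_product case_prod_beta)

lemma Dl_pow:
  fixes u :: "('a::finite, 'k::field) tseries"
  assumes pu: "prim u"
  shows "Dl (ts_pow u m) s t = (\<Sum>q\<le>m. of_nat (m choose q) * ts_pow u q s * ts_pow u (m - q) t)"
proof (induction m arbitrary: s t)
  case 0
  have "Dl ts_one s t = ts_one s * ts_one t"
  proof (cases "s = [] \<and> t = []")
    case True then show ?thesis by (auto simp: ts_one_def)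
  next
    case False
    have "Dl ts_one s t = 0" unfolding Dl_def
    proof (rule sum.neutral, rule ballI)
      fix p assume "p \<in> WW s t"
      then have "length p = length s + length t" using Lw_Rw_length[of p] by (simp add: WW_def)
      then have "map fst p \<noteq> []" using False by auto
      then show "ts_one (map fst p) = 0" by (simp add: ts_one_def)
    qed
    then show ?thesis using False by (auto simp: ts_one_def)
  qed
  then show ?case by simp
next
  case (Suc m)
  let ?P = "\<lambda>q w. ts_pow u q w"
  let ?I = "{..length s} \<times> {..length t}"
  have "Dl (ts_pow u (Suc m)) s t = (\<Sum>ij\<in>?I.
        Dl u (take (fst ij) s) (take (snd ij) t) * Dl (ts_pow u m) (drop (fst ij) s) (drop (snd ij) t))"
    by (simp add: Dl_mul)
  also have "\<dots> = (\<Sum>ij\<in>?I. (if take (snd ij) t = [] then u (take (fst ij) s) * Dl (ts_pow u m) (drop (fst ij) s) (drop (snd ij) t) else 0))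
      + (\<Sum>ij\<in>?I. (if take (fst ij) s = [] then u (take (snd ij) t) * Dl (ts_pow u m) (drop (fst ij) s) (drop (snd ij) t) else 0))"
    by (subst sum.distrib[symmetric], rule sum.cong, auto simp: prim_Dl[OF pu])
  also have "(\<Sum>ij\<in>?I. (if take (snd ij) t = [] then u (take (fst ij) s) * Dl (ts_pow u m) (drop (fst ij) s) (drop (snd ij) t) else 0))
      = (\<Sum>i\<le>length s. \<Sum>j\<le>length t. (if take j t = [] then u (take i s) * Dl (ts_pow u m) (drop i s) (drop j t) else 0))"
    by (rule sum_prod_fst_snd)
  also have "\<dots> = (\<Sum>i\<le>length s. u (take i s) * Dl (ts_pow u m) (drop i s) t)"
    by (simp only: sum_if_zero_idx drop_0)
  also have "(\<Sum>ij\<in>?I. (if take (fst ij) s = [] then u (take (snd ij) t) * Dl (ts_pow u m) (drop (fst ij) s) (drop (snd ij) t) else 0))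
      = (\<Sum>i\<le>length s. \<Sum>j\<le>length t. (if take i s = [] then u (take j t) * Dl (ts_pow u m) (drop i s) (drop j t) else 0))"
    by (rule sum_prod_fst_snd)
  also have "\<dots> = (\<Sum>j\<le>length t. \<Sum>i\<le>length s. (if take i s = [] then u (take j t) * Dl (ts_pow u m) (drop i s) (drop j t) else 0))"
    by (rule sum.swap)
  also have "\<dots> = (\<Sum>j\<le>length t. u (take j t) * Dl (ts_pow u m) s (drop j t))"
    by (simp only: sum_if_zero_idx drop_0)
  also have "(\<Sum>i\<le>length s. u (take i s) * Dl (ts_pow u m) (drop i s) t)
      = (\<Sum>q\<le>m. of_nat (m choose q) * ?P (Suc q) s * ?P (m - q) t)"
    by (simp add: Suc.IH sum_distrib_left sum_distrib_right sum.swap[of _ "{..length s}"] ts_mul_def algebra_simps)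
  also have "(\<Sum>j\<le>length t. u (take j t) * Dl (ts_pow u m) s (drop j t))
      = (\<Sum>q\<le>m. of_nat (m choose q) * ?P q s * ?P (Suc (m - q)) t)"
    by (simp add: Suc.IH sum_distrib_left sum_distrib_right sum.swap[of _ "{..length t}"] ts_mul_def algebra_simps)
  finally show ?case using pascal_sum[of m "\<lambda>q. ?P q s" "\<lambda>q. ?P q t"] by simp
qed

lemma Psi_pow:
  fixes u :: "('a::finite, 'k::field) tseries"
  assumes pu: "prim u"
  shows "Psi (ts_pow u m) w = 2 ^ m * ts_pow u m w"
proof -
  have "Psi (ts_pow u m) w = (\<Sum>i\<le>length w. \<Sum>q\<le>m. of_nat (m choose q) * (ts_pow u q (take i w) * ts_pow u (m - q) (drop i w)))"
    by (simp add: Psi_def Dl_pow[OF pu] mult.assoc)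
  also have "\<dots> = (\<Sum>q\<le>m. \<Sum>i\<le>length w. of_nat (m choose q) * (ts_pow u q (take i w) * ts_pow u (m - q) (drop i w)))"
    by (rule sum.swap)
  also have "\<dots> = (\<Sum>q\<le>m. of_nat (m choose q) * ts_mul (ts_pow u q) (ts_pow u (m - q)) w)"
    by (simp add: ts_mul_def sum_distrib_left)
  also have "\<dots> = (\<Sum>q\<le>m. of_nat (m choose q) * ts_pow u m w)"
    by (rule sum.cong) (simp_all add: ts_pow_add)
  also have "\<dots> = of_nat (\<Sum>q\<le>m. m choose q) * ts_pow u m w"
    by (simp add: sum_distrib_right)
  also have "\<dots> = 2 ^ m * ts_pow u m w"
    by (simp add: choose_row_sum)
  finally show ?thesis .
qed

lemma Psi_ext:
  assumes "\<And>v. length v = length w \<Longrightarrow> x v = y v"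
  shows "Psi x w = Psi y w"
  unfolding Psi_def by (rule sum.cong[OF refl], rule Dl_ext) (simp add: assms)

lemma Psi_add: "Psi (\<lambda>w. x w + y w) w = Psi x w + Psi y w"
  by (simp add: Psi_def Dl_def sum.distrib)
lemma Psi_diff: "Psi (\<lambda>w. x w - y w) w = Psi x w - Psi y w"
  by (simp add: Psi_def Dl_def sum_subtractf)
lemma Psi_smult: "Psi (\<lambda>w. c * x w) w = c * Psi x w"
  by (simp add: Psi_def Dl_def sum_distrib_left)
lemma Psi_zero: "Psi (\<lambda>w. 0) w = 0"
  by (simp add: Psi_def Dl_def)
lemma Psi_sum: "Psi (\<lambda>w. \<Sum>i\<in>S. F i w) w = (\<Sum>i\<in>S. Psi (F i) w)"
  by (simp add: Psi_def Dl_def sum.swap[of _ S])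

definition PP :: "'a list \<Rightarrow> ('a \<times> bool) list set" where
  "PP w = {p. Lw p @ Rw p = w}"

lemma finite_PP: "finite (PP (w::'a::finite list))"
proof (rule finite_subset[OF _ finite_len[of "length w"]])
  show "PP w \<subseteq> {p. length p = length w}"
    using Lw_Rw_length by (auto simp: PP_def)
qed

lemma Psi_PP: "Psi x (w::'a::finite list) = (\<Sum>p\<in>PP w. x (map fst p))"
proof -
  have "Psi x w = (\<Sum>i\<le>length w. \<Sum>p\<in>WW (take i w) (drop i w). x (map fst p))"
    by (simp add: Psi_def Dl_def)
  also have "\<dots> = (\<Sum>(i,p)\<in>Sigma {..length w} (\<lambda>i. WW (take i w) (drop i w)). x (map fst p))"
    by (rule sum.Sigma) (auto simp: finite_WW)
  also have "\<dots> = (\<Sum>p\<in>PP w. x (map fst p))"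
    by (rule sum.reindex_bij_witness[where i = "\<lambda>p. (length (Lw p), p)" and j = "\<lambda>(i,p). p"])
       (auto simp: WW_def PP_def min_def)
  finally show ?thesis .
qed

section \<open>Commutator span\<close>

lemma cs_add: "x \<in> comm_span \<Longrightarrow> y \<in> comm_span \<Longrightarrow> ts_add x y \<in> comm_span"
proof (induction rule: comm_span.induct)
  case zero
  then show ?case by (simp add: ts_add_def)
next
  case (step x a b)
  have "ts_add (ts_add (ts_diff (ts_mul a b) (ts_mul b a)) x) y = ts_add (ts_diff (ts_mul a b) (ts_mul b a)) (ts_add x y)"
    by (simp add: ts_add_def add.assoc)
  then show ?case using step comm_span.step by metis
qed

lemma ts_mul_smultL: "ts_mul (ts_smult c f) g = ts_smult c (ts_mul f g)"
  by (simp add: ts_mul_def ts_smult_def sum_distrib_left mult.assoc fun_eq_iff)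
lemma ts_mul_smultR: "ts_mul g (ts_smult c f) = ts_smult c (ts_mul g f)"
  by (simp add: ts_mul_def ts_smult_def sum_distrib_left algebra_simps fun_eq_iff)

lemma cs_smult: "x \<in> comm_span \<Longrightarrow> ts_smult c x \<in> comm_span"
proof (induction rule: comm_span.induct)
  case zero
  then show ?case by (simp add: ts_smult_def comm_span.zero)
next
  case (step x a b)
  have "ts_smult c (ts_add (ts_diff (ts_mul a b) (ts_mul b a)) x)
      = ts_add (ts_diff (ts_mul (ts_smult c a) b) (ts_mul b (ts_smult c a))) (ts_smult c x)"
    by (simp add: ts_mul_smultL ts_mul_smultR) (simp add: ts_add_def ts_diff_def ts_smult_def algebra_simps)
  then show ?case using step comm_span.step by metis
qed

lemma cs_comm: "ts_diff (ts_mul a b) (ts_mul b a) \<in> comm_span"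
proof -
  have "ts_add (ts_diff (ts_mul a b) (ts_mul b a)) (\<lambda>w. 0) = ts_diff (ts_mul a b) (ts_mul b a)"
    by (simp add: ts_add_def)
  then show ?thesis using comm_span.step[OF comm_span.zero, of a b] by simp
qed

lemma cs_sum: "finite S \<Longrightarrow> (\<forall>i\<in>S. F i \<in> comm_span) \<Longrightarrow> (\<lambda>w. \<Sum>i\<in>S. F i w) \<in> comm_span"
proof (induction S rule: finite_induct)
  case empty
  then show ?case by (simp add: comm_span.zero)
next
  case (insert i S)
  have "(\<lambda>w. \<Sum>i\<in>insert i S. F i w) = ts_add (F i) (\<lambda>w. \<Sum>i\<in>S. F i w)"
    using insert by (simp add: ts_add_def)
  moreover have "ts_add (F i) (\<lambda>w. \<Sum>i\<in>S. F i w) \<in> comm_span"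
    using insert.IH insert.prems by (intro cs_add) auto
  ultimately show ?case by simp
qed

definition teqN :: "nat \<Rightarrow> ('a, 'k::field) tseries \<Rightarrow> bool" where
  "teqN N X \<longleftrightarrow> (\<exists>g\<in>comm_span. \<forall>w. length w < N \<longrightarrow> X w = g w)"

lemma teqN_cong: "teqN N X \<Longrightarrow> (\<And>w. length w < N \<Longrightarrow> X w = Y w) \<Longrightarrow> teqN N Y"
  unfolding teqN_def by metis

lemma teqN_zero: "teqN N (\<lambda>w. 0)"
  unfolding teqN_def using comm_span.zero by force

lemma teqN_add: "teqN N X \<Longrightarrow> teqN N Y \<Longrightarrow> teqN N (\<lambda>w. X w + Y w)"
  unfolding teqN_def using cs_add by (fastforce simp: ts_add_def)

lemma teqN_smult: "teqN N X \<Longrightarrow> teqN N (\<lambda>w. c * X w)"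
  unfolding teqN_def using cs_smult by (fastforce simp: ts_smult_def)

lemma teqN_diff: "teqN N X \<Longrightarrow> teqN N Y \<Longrightarrow> teqN N (\<lambda>w. X w - Y w)"
  using teqN_add[of N X "\<lambda>w. (-1) * Y w"] teqN_smult[of N Y "-1"] by simp

lemma teqN_mono: "teqN N X \<Longrightarrow> M \<le> N \<Longrightarrow> teqN M X"
  unfolding teqN_def by auto

lemma teqN_sum: "finite S \<Longrightarrow> (\<forall>i\<in>S. teqN N (F i)) \<Longrightarrow> teqN N (\<lambda>w. \<Sum>i\<in>S. F i w)"
proof (induction S rule: finite_induct)
  case empty
  then show ?case by (simp add: teqN_zero)
next
  case (insert i S)
  then show ?case using teqN_add[of N "F i" "\<lambda>w. \<Sum>i\<in>S. F i w"] by simp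
qed

lemma trace_eq_teqN: "trace_eq x y \<longleftrightarrow> (\<forall>N. teqN N (ts_diff x y))"
  by (simp add: trace_eq_def teqN_def)

section \<open>Psi preserves the trace relation\<close>

definition flp :: "('a \<times> bool) list \<Rightarrow> ('a \<times> bool) list" where
  "flp p = map (\<lambda>x. (fst x, \<not> snd x)) p"

lemma flp_simps[simp]: "Lw (flp p) = Rw p" "Rw (flp p) = Lw p" "map fst (flp p) = map fst p"
  "flp (flp p) = p" "length (flp p) = length p"
  by (induction p) (auto simp: flp_def Lw_def Rw_def)

definition ev :: "'a list \<Rightarrow> ('a, 'k::field) tseries" where
  "ev x = (\<lambda>v. if v = x then 1 else 0)"

lemma finite_splits: "finite {(x,y). x @ y = (v::'a list)}"
proof -
  have "{(x,y). x @ y = v} \<subseteq> (\<lambda>i. (take i v, drop i v)) ` {..length v}"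
  proof
    fix z assume "z \<in> {(x,y). x @ y = v}"
    then obtain x y where "z = (x,y)" "x @ y = v" by auto
    then show "z \<in> (\<lambda>i. (take i v, drop i v)) ` {..length v}"
      by (auto intro!: image_eqI[where x = "length x"])
  qed
  then show ?thesis by (rule finite_subset) simp
qed

lemma ts_mul_ev: "ts_mul (ev x) (ev y) v = (if v = x @ y then 1 else 0)"
proof -
  have "ts_mul (ev x) (ev y) v = (\<Sum>z\<in>{(x,y). x @ y = v}. if z = (x, y) then 1 else 0)"
    unfolding ts_mul_split by (rule sum.cong) (auto simp: ev_def split: if_splits)
  also have "\<dots> = (if v = x @ y then 1 else 0)"
    using finite_splits[of v] by (simp add: sum.delta)
  finally show ?thesis .
qed

lemma Psi_mul_split: "Psi (ts_mul a b) (w::'a::finite list) = (\<Sum>(x,y)\<in>{(x,y). x @ y \<in> PP w}. a (map fst x) * b (map fst y))"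
proof -
  have "Psi (ts_mul a b) w = (\<Sum>p\<in>PP w. \<Sum>i\<le>length p. a (map fst (take i p)) * b (map fst (drop i p)))"
    by (simp add: Psi_PP ts_mul_def take_map drop_map)
  also have "\<dots> = (\<Sum>(x,y)\<in>{(x,y). x @ y \<in> PP w}. a (map fst x) * b (map fst y))"
    by (rule sum_split[OF finite_PP])
  finally show ?thesis .
qed

lemma Psi_comm:
  fixes a b :: "('a::finite, 'k::field) tseries"
  shows "teqN N (\<lambda>w. Psi (ts_mul a b) w - Psi (ts_mul b a) w)"
proof -
  define S :: "(('a \<times> bool) list \<times> ('a \<times> bool) list) set" where
    "S = {(p1,p2). length p1 + length p2 < N}"
  define c where "c = (\<lambda>pq::('a \<times> bool) list \<times> ('a \<times> bool) list. a (map fst (fst pq)) * b (map fst (snd pq)))"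
  define X where "X = (\<lambda>pq::('a \<times> bool) list \<times> ('a \<times> bool) list. Lw (fst pq) @ Lw (snd pq) @ Rw (fst pq))"
  define Y where "Y = (\<lambda>pq::('a \<times> bool) list \<times> ('a \<times> bool) list. Rw (snd pq))"
  define G where "G = (\<lambda>pq. ts_diff (ts_mul (ts_smult (c pq) (ev (X pq))) (ev (Y pq)))
                                     (ts_mul (ev (Y pq)) (ts_smult (c pq) (ev (X pq)))))"
  have finS: "finite S"
  proof (rule finite_subset)
    show "S \<subseteq> {p. length p < N} \<times> {p. length p < N}" by (auto simp: S_def)
    show "finite ({p :: ('a \<times> bool) list. length p < N} \<times> {p :: ('a \<times> bool) list. length p < N})"
      using finite_len_less by blast
  qed
  have gcs: "(\<lambda>w. \<Sum>pq\<in>S. G pq w) \<in> comm_span"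
    using finS by (rule cs_sum) (simp add: G_def cs_comm)
  have Gw: "G pq w = (if w = X pq @ Y pq then c pq else 0) - (if w = Y pq @ X pq then c pq else 0)" for pq w
    unfolding G_def unfolding ts_mul_smultL ts_mul_smultR unfolding ts_diff_def ts_smult_def ts_mul_ev
    by simp
  have "Psi (ts_mul a b) w - Psi (ts_mul b a) w = (\<Sum>pq\<in>S. G pq w)" if wN: "length w < N" for w
  proof -
    have set1: "{(x,y). x @ y \<in> PP w} = {pq \<in> S. w = X pq @ Y pq}"
    proof (intro set_eqI iffI)
      fix z assume "z \<in> {(x,y). x @ y \<in> PP w}"
      moreover obtain x y where z: "z = (x,y)" by (cases z)
      ultimately have h: "Lw x @ Lw y @ Rw x @ Rw y = w" by (simp add: PP_def)
      then have "length x + length y = length w"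
        using Lw_Rw_length[of x] Lw_Rw_length[of y] by (auto)
      then show "z \<in> {pq \<in> S. w = X pq @ Y pq}" using h wN z by (auto simp: S_def X_def Y_def)
    next
      fix z assume "z \<in> {pq \<in> S. w = X pq @ Y pq}"
      then show "z \<in> {(x,y). x @ y \<in> PP w}" by (auto simp: PP_def X_def Y_def)
    qed
    have e1: "Psi (ts_mul a b) w = (\<Sum>pq\<in>S. if w = X pq @ Y pq then c pq else 0)"
      unfolding Psi_mul_split set1 using finS
      apply (simp add: sum.inter_filter case_prod_beta)
      apply (rule sum.cong[OF refl])
      apply (simp add: c_def)
      done
    have e2: "Psi (ts_mul b a) w = (\<Sum>pq\<in>{pq \<in> S. w = Y pq @ X pq}. c pq)"
      unfolding Psi_mul_split
    proof (rule sum.reindex_bij_witness[where j = "\<lambda>(x,y). (y, flp x)" and i = "\<lambda>(p1,p2). (flp p2, p1)"])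
      fix z assume "z \<in> {(x,y). x @ y \<in> PP w}"
      moreover obtain x y where z: "z = (x,y)" by (cases z)
      ultimately have h: "Lw x @ Lw y @ Rw x @ Rw y = w" by (simp add: PP_def)
      then have "length x + length y = length w"
        using Lw_Rw_length[of x] Lw_Rw_length[of y] by (auto)
      then show "(case case z of (x, y) \<Rightarrow> (y, flp x) of (p1, p2) \<Rightarrow> (flp p2, p1)) = z"
        "(case z of (x, y) \<Rightarrow> (y, flp x)) \<in> {pq \<in> S. w = Y pq @ X pq}"
        "c (case z of (x, y) \<Rightarrow> (y, flp x)) = (case z of (x, y) \<Rightarrow> b (map fst x) * a (map fst y))"
        using h wN z by (auto simp: S_def X_def Y_def c_def)
    next
      fix z assume "z \<in> {pq \<in> S. w = Y pq @ X pq}"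
      moreover obtain x y where z: "z = (x,y)" by (cases z)
      ultimately show "(case case z of (p1, p2) \<Rightarrow> (flp p2, p1) of (x, y) \<Rightarrow> (y, flp x)) = z"
        "(case z of (p1, p2) \<Rightarrow> (flp p2, p1)) \<in> {(x,y). x @ y \<in> PP w}"
        by (auto simp: PP_def X_def Y_def)
    qed
    have e2': "Psi (ts_mul b a) w = (\<Sum>pq\<in>S. if w = Y pq @ X pq then c pq else 0)"
      unfolding e2 using finS by (simp add: sum.inter_filter)
    show ?thesis unfolding e1 e2' Gw by (simp add: sum_subtractf)
  qed
  then have H: "\<forall>w. length w < N \<longrightarrow> Psi (ts_mul a b) w - Psi (ts_mul b a) w = (\<lambda>w. \<Sum>pq\<in>S. G pq w) w"
    by simp
  show ?thesis unfolding teqN_def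
    apply (rule bexI[OF _ gcs])
    using H by simp
qed

lemma Psi_teqN:
  fixes X :: "('a::finite, 'k::field) tseries"
  assumes "teqN N X" shows "teqN N (Psi X)"
proof -
  obtain g where g: "g \<in> comm_span" "\<And>w. length w < N \<Longrightarrow> X w = g w"
    using assms unfolding teqN_def by blast
  have "teqN N (Psi g)" using g(1)
  proof (induction rule: comm_span.induct)
    case zero
    then show ?case by (simp add: Psi_zero teqN_zero)
  next
    case (step x a b)
    have "Psi (ts_add (ts_diff (ts_mul a b) (ts_mul b a)) x) w
        = (Psi (ts_mul a b) w - Psi (ts_mul b a) w) + Psi x w" for w
      unfolding ts_add_def ts_diff_def by (simp add: Psi_add Psi_diff)
    then show ?case using teqN_add[OF Psi_comm step.IH] by simp
  qed
  then show ?thesis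
    by (rule teqN_cong) (rule Psi_ext, simp add: g(2))
qed

lemma pow2_inj: "((2::'k::field_char_0) ^ m = 2 ^ k) \<longleftrightarrow> m = k"
proof -
  have "((2::'k) ^ m = 2 ^ k) \<longleftrightarrow> (of_nat (2 ^ m) = (of_nat (2 ^ k) :: 'k))" by simp
  also have "\<dots> \<longleftrightarrow> (2::nat) ^ m = 2 ^ k" by (rule of_nat_eq_iff)
  also have "\<dots> \<longleftrightarrow> m = k" by simp
  finally show ?thesis .
qed

lemma elim_lemma:
  fixes D :: "nat \<Rightarrow> ('a::finite, 'k::field_char_0) tseries"
  assumes eig: "\<And>m w. Psi (D m) w = 2 ^ m * D m w"
  shows "finite S \<Longrightarrow> teqN N (\<lambda>w. \<Sum>m\<in>S. c m * D m w) \<Longrightarrow> m \<in> S \<Longrightarrow> c m \<noteq> 0 \<Longrightarrow> teqN N (D m)"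
proof (induction S arbitrary: c m rule: finite_induct)
  case empty then show ?case by simp
next
  case (insert k S)
  let ?X = "\<lambda>w. \<Sum>m\<in>insert k S. c m * D m w"
  have X: "teqN N ?X" by fact
  have PX: "teqN N (Psi ?X)" using Psi_teqN[OF X] .
  have Pw: "Psi ?X w = (\<Sum>m\<in>insert k S. c m * (2 ^ m * D m w))" for w
    by (simp add: Psi_sum Psi_smult eig)
  define c' where "c' m = c m * (2 ^ m - 2 ^ k)" for m
  have T1: "teqN N (\<lambda>w. Psi ?X w - 2 ^ k * ?X w)"
    by (rule teqN_diff[OF PX teqN_smult[OF X]])
  have T2: "teqN N (\<lambda>w. \<Sum>m\<in>S. c' m * D m w)"
  proof (rule teqN_cong[OF T1])
    fix w :: "'a list"
    have "Psi ?X w - 2 ^ k * ?X w = (\<Sum>m\<in>insert k S. c' m * D m w)"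
      unfolding Pw c'_def by (simp add: sum_distrib_left sum_subtractf[symmetric] algebra_simps)
    also have "\<dots> = (\<Sum>m\<in>S. c' m * D m w)"
      using insert.hyps by (simp add: c'_def)
    finally show "Psi ?X w - 2 ^ k * ?X w = (\<Sum>m\<in>S. c' m * D m w)" .
  qed
  have IH': "teqN N (D m')" if "m' \<in> S" "c m' \<noteq> 0" for m'
  proof -
    have "m' \<noteq> k" using that insert.hyps by auto
    then have "c' m' \<noteq> 0" using that by (simp add: c'_def pow2_inj)
    then show ?thesis using insert.IH[OF T2 that(1)] by simp
  qed
  have sumS: "teqN N (\<lambda>w. \<Sum>m\<in>S. c m * D m w)"
  proof (rule teqN_sum[OF insert.hyps(1)], rule ballI)
    fix m' assume m': "m' \<in> S"
    show "teqN N (\<lambda>w. c m' * D m' w)"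
    proof (cases "c m' = 0")
      case True then show ?thesis using teqN_zero by simp
    next
      case False then show ?thesis using teqN_smult[OF IH'[OF m' False]] by simp
    qed
  qed
  have Tk: "teqN N (\<lambda>w. c k * D k w)"
    by (rule teqN_cong[OF teqN_diff[OF X sumS]]) (simp add: insert.hyps)
  show ?case
  proof (cases "m = k")
    case True
    have "teqN N (\<lambda>w. inverse (c k) * (c k * D k w))" by (rule teqN_smult[OF Tk])
    then show ?thesis using True insert.prems by (simp add: teqN_cong)
  next
    case False
    then show ?thesis using IH' insert.prems by auto
  qed
qed

lemma exp_trunc:
  assumes "u [] = 0" "length w < N"
  shows "ts_exp u w = (\<Sum>j<N. ts_pow u j w / fact j)"
  unfolding ts_exp_def
proof (rule sum.mono_neutral_left)
  show "finite {..<N}" by simp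
  show "{..length w} \<subseteq> {..<N}" using assms by auto
  show "\<forall>i\<in>{..<N} - {..length w}. ts_pow u i w / fact i = 0"
    using ts_pow_small[of u] assms(1) by auto
qed

theorem theorem3p2:
  fixes u v :: "'a::finite list \<Rightarrow> 'k::field_char_0"
  assumes "lie_series u" and "lie_series v"
    and "trace_eq (ts_exp u) (ts_exp v)"
  shows "\<forall>m::nat. trace_eq (ts_pow u m) (ts_pow v m)"
proof
  fix m :: nat
  have pu: "prim u" and pv: "prim v" using assms lie_series_prim by auto
  have u0: "u [] = 0" and v0: "v [] = 0" using pu pv by (auto simp: prim_def)
  define D where "D j = ts_diff (ts_pow u j) (ts_pow v j)" for j
  have eig: "Psi (D j) w = 2 ^ j * D j w" for j w
    unfolding D_def ts_diff_def by (simp add: Psi_diff Psi_pow[OF pu] Psi_pow[OF pv] algebra_simps)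
  show "trace_eq (ts_pow u m) (ts_pow v m)"
    unfolding trace_eq_teqN
  proof
    fix N
    define N' where "N' = max N (Suc m)"
    have E: "teqN N' (ts_diff (ts_exp u) (ts_exp v))" using assms(3) by (simp add: trace_eq_teqN)
    have E': "teqN N' (\<lambda>w. \<Sum>j\<in>{..<N'}. (1 / fact j) * D j w)"
    proof (rule teqN_cong[OF E])
      fix w :: "'a list" assume "length w < N'"
      then show "ts_diff (ts_exp u) (ts_exp v) w = (\<Sum>j\<in>{..<N'}. (1 / fact j) * D j w)"
        by (simp add: ts_diff_def D_def exp_trunc[of u, OF u0] exp_trunc[of v, OF v0] sum_subtractf[symmetric] diff_divide_distrib)
    qed
    have "teqN N' (D m)"
      by (rule elim_lemma[OF eig _ E']) (auto simp: N'_def)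
    then show "teqN N (ts_diff (ts_pow u m) (ts_pow v m))"
      unfolding D_def by (rule teqN_mono) (simp add: N'_def)
  qed
qed

end
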